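(* Let $S$ be a completely simple semigroup. If $S$ is DSC, then $S$ is a group.
   Context: For a semigroup $S$, a diagonal subsemigroup of $S\times S$ is a subsemigroup of $S\times S$ containing $\Delta=\{(s,s)\colon s\in S\}$. A congruence on $S$ is a diagonal subsemigroup of $S\times S$ that is symmetric and transitive. A semigroup $S$ is DSC if every diagonal subsemigroup of $S\times S$ is a congruence on $S$. An idempotent $e$ of $S$ is primitive if it is minimal in the order $e\le f\iff ef=fe=e$ on idempotents. A semigroup is completely simple if it is simple (has no ideals other than itself) and has a primitive idempotent. *)

theory Defs
  imports Main
begin

text \<open>A semigroup S is modelled as a type of class semigroup_mult (carrier = UNIV).\<close>

definition diagonal_subsemigroup :: "('a::semigroup_mult \<times> 'a) set \<Rightarrow> bool" where
  "diagonal_subsemigroup D \<longleftrightarrow>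
     Id \<subseteq> D \<and> (\<forall>a b c d. (a, b) \<in> D \<longrightarrow> (c, d) \<in> D \<longrightarrow> (a * c, b * d) \<in> D)"

definition congruence_sg :: "('a::semigroup_mult \<times> 'a) set \<Rightarrow> bool" where
  "congruence_sg D \<longleftrightarrow> diagonal_subsemigroup D \<and> sym D \<and> trans D"

definition DSC :: "'a::semigroup_mult itself \<Rightarrow> bool" where
  "DSC _ \<longleftrightarrow> (\<forall>D :: ('a \<times> 'a) set. diagonal_subsemigroup D \<longrightarrow> congruence_sg D)"

definition idempotent :: "'a::semigroup_mult \<Rightarrow> bool" where
  "idempotent e \<longleftrightarrow> e * e = e"

definition idem_le :: "'a::semigroup_mult \<Rightarrow> 'a \<Rightarrow> bool" where
  "idem_le e f \<longleftrightarrow> e * f = e \<and> f * e = e"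

definition primitive_idempotent :: "'a::semigroup_mult \<Rightarrow> bool" where
  "primitive_idempotent e \<longleftrightarrow> idempotent e \<and>
     (\<forall>f. idempotent f \<longrightarrow> idem_le f e \<longrightarrow> f = e)"

definition ideal_sg :: "'a::semigroup_mult set \<Rightarrow> bool" where
  "ideal_sg I \<longleftrightarrow> I \<noteq> {} \<and> (\<forall>s x. x \<in> I \<longrightarrow> s * x \<in> I \<and> x * s \<in> I)"

definition simple_sg :: "'a::semigroup_mult itself \<Rightarrow> bool" where
  "simple_sg _ \<longleftrightarrow> (\<forall>I :: 'a set. ideal_sg I \<longrightarrow> I = UNIV)"

definition completely_simple :: "'a::semigroup_mult itself \<Rightarrow> bool" where
  "completely_simple T \<longleftrightarrow> simple_sg T \<and> (\<exists>e :: 'a. primitive_idempotent e)"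

definition is_group_sg :: "'a::semigroup_mult itself \<Rightarrow> bool" where
  "is_group_sg _ \<longleftrightarrow> (\<exists>e :: 'a. (\<forall>x. e * x = x \<and> x * e = x) \<and>
                                  (\<forall>x. \<exists>y. x * y = e \<and> y * x = e))"

end

theory Submission
  imports Defs
begin

lemma ideal_gen:
  fixes y :: "'a::semigroup_mult"
  assumes "simple_sg TYPE('a)"
  shows "\<exists>a b. x = a * y * b"
proof -
  have "ideal_sg {z. \<exists>a b. z = a * y * b}"
    unfolding ideal_sg_def
  proof (intro conjI allI impI)
    show "{z. \<exists>a b. z = a * y * b} \<noteq> {}" by blast
  next
    fix s z assume "z \<in> {z. \<exists>a b. z = a * y * b}"
    then obtain a b where z: "z = a * y * b" by blast
    have "s * z = (s * a) * y * b" "z * s = a * y * (b * s)" using z by (simp_all add: mult.assoc)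
    then show "s * z \<in> {z. \<exists>a b. z = a * y * b}" "z * s \<in> {z. \<exists>a b. z = a * y * b}" by blast+
  qed
  then have "{z. \<exists>a b. z = a * y * b} = UNIV" using assms unfolding simple_sg_def by blast
  then show ?thesis by blast
qed

lemma inv_lemma:
  fixes e :: "'a::semigroup_mult"
  assumes pe: "primitive_idempotent e" and ex: "e * x = x" and xe: "x * e = x"
    and eq: "e = a * x * b"
  shows "x * ((e*b*e) * (e*a*e)) = e \<and> ((e*b*e) * (e*a*e)) * x = e"
proof -
  have ee: "e * e = e" using pe unfolding primitive_idempotent_def idempotent_def by blast
  define a' where "a' = e*a*e"
  define b' where "b' = e*b*e"
  have e2: "a' * x * b' = e"
  proof -
    have "a' * x * b' = e * (a * (e * x * e) * b) * e" unfolding a'_def b'_def by (simp add: mult.assoc)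
    also have "\<dots> = e * e * e" using ex xe eq by (simp add: mult.assoc)
    finally show ?thesis using ee by simp
  qed
  have ea: "e * a' = a'" "a' * e = a'" "e * b' = b'" "b' * e = b'"
    unfolding a'_def b'_def using ee by (simp_all add: mult.assoc[symmetric]) (simp_all add: mult.assoc)
  define f where "f = x * b' * a'"
  have "f * f = x * b' * (a' * x * b') * a'" unfolding f_def by (simp add: mult.assoc)
  also have "\<dots> = f" unfolding f_def using e2 ea by (simp add: mult.assoc)
  finally have ff: "f * f = f" .
  have "e * f = f" "f * e = f" unfolding f_def using ex ea by (simp_all add: mult.assoc[symmetric]) (simp_all add: mult.assoc)
  then have f: "f = e" using pe ff unfolding primitive_idempotent_def idempotent_def idem_le_def by blast
  define g where "g = b' * a' * x"
  have "g * g = b' * (a' * x * b') * a' * x" unfolding g_def by (simp add: mult.assoc)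
  also have "\<dots> = g" unfolding g_def using e2 ea by (simp add: mult.assoc)
  finally have gg: "g * g = g" .
  have "e * g = g" "g * e = g" unfolding g_def using xe ea by (simp_all add: mult.assoc[symmetric]) (simp_all add: mult.assoc)
  then have g: "g = e" using pe gg unfolding primitive_idempotent_def idempotent_def idem_le_def by blast
  show ?thesis using f g unfolding f_def g_def a'_def b'_def by (simp add: mult.assoc)
qed


lemma lemA:
  fixes e x y :: "'a::semigroup_mult"
  assumes pe: "primitive_idempotent e" and sim: "simple_sg TYPE('a)"
  shows "\<exists>s. x = s * (y * x)"
proof -
  have ee: "e * e = e" using pe unfolding primitive_idempotent_def idempotent_def by blast
  obtain a b where x: "x = a * e * b" using ideal_gen[OF sim] by blast
  define g where "g = e * (y * a) * e"
  have eg: "e * g = g" "g * e = g" unfolding g_def using ee by (simp_all add: mult.assoc[symmetric]) (simp_all add: mult.assoc)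
  obtain p q where "e = p * g * q" using ideal_gen[OF sim] by blast
  then obtain w where w: "w * g = e" using inv_lemma[OF pe eg] by blast
  have "x = a * (w * g) * b" using x w by simp
  also have "\<dots> = (a * w * e) * (y * x)" unfolding g_def x by (simp add: mult.assoc)
  finally show ?thesis by blast
qed

lemma lemB:
  fixes e x y :: "'a::semigroup_mult"
  assumes pe: "primitive_idempotent e" and sim: "simple_sg TYPE('a)"
  shows "\<exists>s. x = (x * y) * s"
proof -
  have ee: "e * e = e" using pe unfolding primitive_idempotent_def idempotent_def by blast
  obtain a b where x: "x = a * e * b" using ideal_gen[OF sim] by blast
  define g where "g = e * (b * y) * e"
  have eg: "e * g = g" "g * e = g" unfolding g_def using ee by (simp_all add: mult.assoc[symmetric]) (simp_all add: mult.assoc)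
  obtain p q where "e = p * g * q" using ideal_gen[OF sim] by blast
  then obtain w where w: "g * w = e" using inv_lemma[OF pe eg] by blast
  have "x = a * (g * w) * b" using x w by simp
  also have "\<dots> = (x * y) * (e * w * b)" unfolding g_def x by (simp add: mult.assoc)
  finally show ?thesis by blast
qed

theorem mainTheorem3:
  assumes "completely_simple TYPE('a::semigroup_mult)"
    and "DSC TYPE('a)"
  shows "is_group_sg TYPE('a)"
proof -
  have sim: "simple_sg TYPE('a)" using assms(1) unfolding completely_simple_def by blast
  obtain e :: 'a where pe: "primitive_idempotent e" using assms(1) unfolding completely_simple_def by blast
  have ee: "e * e = e" using pe unfolding primitive_idempotent_def idempotent_def by blast
  have symD: "sym D" if "diagonal_subsemigroup D" for D :: "('a \<times> 'a) set"
    using assms(2) that unfolding DSC_def congruence_sg_def by blast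
  define L where "L = (\<lambda>x y::'a. (\<exists>s. x = s*y) \<and> (\<exists>t. y = t*x))"
  have Lp: "L (z * x) x" for z x
  proof -
    obtain s where "x = s * (z * x)" using lemA[OF pe sim] by blast
    then show ?thesis unfolding L_def by (metis mult.assoc)
  qed
  have Lrefl: "L x x" for x using Lp[of x x] unfolding L_def by (metis mult.assoc)
  have Lsym: "L x y \<Longrightarrow> L y x" for x y unfolding L_def by blast
  have Ltrans: "L x y \<Longrightarrow> L y z \<Longrightarrow> L x z" for x y z unfolding L_def by (metis mult.assoc)
  have right_id: "b * e = b" for b
  proof -
    define D where "D = {(x,y). L x y} \<union> {(x,y). L x e \<and> L y b}"
    have "diagonal_subsemigroup D" unfolding diagonal_subsemigroup_def
    proof (intro conjI allI impI)
      show "Id \<subseteq> D" unfolding D_def using Lrefl by auto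
    next
      fix x y x' y' assume "(x,y) \<in> D" "(x',y') \<in> D"
      then have "L x' y' \<or> (L x' e \<and> L y' b)" unfolding D_def by auto
      then show "(x*x', y*y') \<in> D" unfolding D_def
        using Lp[of x x'] Lp[of y y'] Ltrans Lsym by blast
    qed
    then have "sym D" by (rule symD)
    moreover have "(e, b) \<in> D" unfolding D_def using Lrefl by auto
    ultimately have "(b, e) \<in> D" unfolding sym_def by blast
    then have "L b e" unfolding D_def by auto
    then obtain s where "b = s * e" unfolding L_def by blast
    then show ?thesis using ee by (simp add: mult.assoc)
  qed
  define R where "R = (\<lambda>x y::'a. (\<exists>s. x = y*s) \<and> (\<exists>t. y = x*t))"
  have Rp: "R (x * z) x" for z x
  proof -
    obtain s where "x = (x * z) * s" using lemB[OF pe sim] by blast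
    then show ?thesis unfolding R_def by (metis mult.assoc)
  qed
  have Rrefl: "R x x" for x using Rp[of x x] unfolding R_def by (metis mult.assoc)
  have Rsym: "R x y \<Longrightarrow> R y x" for x y unfolding R_def by blast
  have Rtrans: "R x y \<Longrightarrow> R y z \<Longrightarrow> R x z" for x y z unfolding R_def by (metis mult.assoc)
  have left_id: "e * b = b" for b
  proof -
    define D where "D = {(x,y). R x y} \<union> {(x,y). R x e \<and> R y b}"
    have "diagonal_subsemigroup D" unfolding diagonal_subsemigroup_def
    proof (intro conjI allI impI)
      show "Id \<subseteq> D" unfolding D_def using Rrefl by auto
    next
      fix x y x' y' assume "(x,y) \<in> D" "(x',y') \<in> D"
      then have "R x y \<or> (R x e \<and> R y b)" unfolding D_def by auto
      then show "(x*x', y*y') \<in> D" unfolding D_def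
        using Rp[of x x'] Rp[of y y'] Rtrans Rsym by blast
    qed
    then have "sym D" by (rule symD)
    moreover have "(e, b) \<in> D" unfolding D_def using Rrefl by auto
    ultimately have "(b, e) \<in> D" unfolding sym_def by blast
    then have "R b e" unfolding D_def by auto
    then obtain s where "b = e * s" unfolding R_def by blast
    then show ?thesis using ee by (simp add: mult.assoc[symmetric])
  qed
  have "\<exists>y. x * y = e \<and> y * x = e" for x
  proof -
    obtain a b where "e = a * x * b" using ideal_gen[OF sim] by blast
    then show ?thesis using inv_lemma[OF pe left_id right_id] by blast
  qed
  then show ?thesis unfolding is_group_sg_def using left_id right_id by blast
qed

end
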